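(* Let $G\subset\mathrm{Isom}(\mathbf H^n)$ be a non-elementary finitely generated torsion-free Kleinian group and $H$ a subgroup of $G$ with $\mathrm{Ax}(G)=\mathrm{Ax}(H)$. Then for every hyperbolic element $g\in G$ there is an integer $n>0$ with $g^n\in H$.
   Context: A Kleinian group is a discrete subgroup of $\mathrm{Isom}(\mathbf{H}^n)$; non-elementary means its limit set has at least three points. A hyperbolic element is an isometry with exactly two fixed points, both at infinity; its axis is the geodesic joining them. $\mathrm{Ax}(G)$ is the set of axes of hyperbolic elements of $G$. *)

theory Defs
  imports "HOL-Analysis.Analysis"
begin

text \<open>Hyperboloid model of hyperbolic n-space inside R^(n,1) = real^'n \<times> real
  (the last coordinate is the time coordinate).\<close>

type_synonym 'n lvec = "(real^'n) \<times> real"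
type_synonym 'n lmap = "'n lvec \<Rightarrow> 'n lvec"

definition lform :: "'n::finite lvec \<Rightarrow> 'n lvec \<Rightarrow> real" where
  "lform x y = fst x \<bullet> fst y - snd x * snd y"

definition hyp_space :: "('n::finite) lvec set" where
  "hyp_space = {x. lform x x = -1 \<and> snd x > 0}"

text \<open>Ideal boundary: future null rays, parametrised by the unit sphere
  (the ray through (xi,1)).\<close>
definition bdry :: "(real^'n::finite) set" where
  "bdry = sphere 0 1"

text \<open>Isom(H^n) = O^+(n,1): linear bijections preserving the Lorentz form
  and the upper sheet of the hyperboloid.\<close>
definition isom :: "('n::finite) lmap set" where
  "isom = {f. linear f \<and> bij f \<and> (\<forall>x y. lform (f x) (f y) = lform x y)
              \<and> f ` hyp_space = hyp_space}"

definition fixes_bdry :: "('n::finite) lmap \<Rightarrow> real^'n \<Rightarrow> bool" where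
  "fixes_bdry f \<xi> \<longleftrightarrow> \<xi> \<in> bdry \<and> (\<exists>c. f (\<xi>, 1) = c *\<^sub>R (\<xi>, 1))"

definition hyperbolic :: "('n::finite) lmap \<Rightarrow> bool" where
  "hyperbolic f \<longleftrightarrow> f \<in> isom \<and> (\<forall>x\<in>hyp_space. f x \<noteq> x)
     \<and> (\<exists>\<xi> \<eta>. \<xi> \<noteq> \<eta> \<and> {\<zeta>. fixes_bdry f \<zeta>} = {\<xi>, \<eta>})"

definition geodesic :: "real^'n::finite \<Rightarrow> real^'n \<Rightarrow> 'n lvec set" where
  "geodesic \<xi> \<eta> = {x \<in> hyp_space. \<exists>a b. x = a *\<^sub>R (\<xi>, 1) + b *\<^sub>R (\<eta>, 1)}"

definition Ax :: "('n::finite) lmap set \<Rightarrow> 'n lvec set set" where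
  "Ax G = {geodesic \<xi> \<eta> | \<xi> \<eta>. \<exists>g\<in>G. hyperbolic g \<and> {\<zeta>. fixes_bdry g \<zeta>} = {\<xi>, \<eta>}}"

text \<open>Klein-model coordinates of a point of the hyperboloid (open unit ball).\<close>
definition klein :: "'n::finite lvec \<Rightarrow> real^'n" where
  "klein x = (1 / snd x) *\<^sub>R fst x"

definition base_point :: "'n::finite lvec" where
  "base_point = (0, 1)"

definition limit_set :: "('n::finite) lmap set \<Rightarrow> (real^'n) set" where
  "limit_set G = {\<xi> \<in> bdry. \<exists>s. (\<forall>k. s k \<in> G) \<and>
                     (\<lambda>k. klein (s k base_point)) \<longlonglongrightarrow> \<xi>}"

definition isom_subgroup :: "('n::finite) lmap set \<Rightarrow> bool" where
  "isom_subgroup G \<longleftrightarrow> G \<subseteq> isom \<and> id \<in> G \<and> (\<forall>f\<in>G. \<forall>g\<in>G. f \<circ> g \<in> G)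
     \<and> (\<forall>f\<in>G. inv f \<in> G)"

definition discrete_group :: "('n::finite) lmap set \<Rightarrow> bool" where
  "discrete_group G \<longleftrightarrow> (\<forall>g\<in>G. \<exists>\<epsilon>>0. \<forall>h\<in>G. onorm (\<lambda>v. h v - g v) < \<epsilon> \<longrightarrow> h = g)"

definition kleinian :: "('n::finite) lmap set \<Rightarrow> bool" where
  "kleinian G \<longleftrightarrow> isom_subgroup G \<and> discrete_group G"

definition fin_generated :: "('n::finite) lmap set \<Rightarrow> bool" where
  "fin_generated G \<longleftrightarrow> (\<exists>S. finite S \<and> S \<subseteq> G \<and>
      G = \<Inter>{K. isom_subgroup K \<and> S \<subseteq> K})"

definition torsion_free :: "('n::finite) lmap set \<Rightarrow> bool" where
  "torsion_free G \<longleftrightarrow> (\<forall>g\<in>G. \<forall>m::nat. m > 0 \<and> g ^^ m = id \<longrightarrow> g = id)"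

definition non_elementary :: "('n::finite) lmap set \<Rightarrow> bool" where
  "non_elementary G \<longleftrightarrow> (\<exists>a b c. a \<in> limit_set G \<and> b \<in> limit_set G \<and> c \<in> limit_set G
      \<and> a \<noteq> b \<and> a \<noteq> c \<and> b \<noteq> c)"

end

theory Submission
  imports Defs
begin

lemma lform_sym: "lform x y = lform y x"
  by (simp add: lform_def inner_commute mult.commute)

lemma lform_add_left: "lform (x + y) z = lform x z + lform y z"
  by (simp add: lform_def inner_add_left algebra_simps)
lemma lform_scale_left: "lform (a *\<^sub>R x) z = a * lform x z"
  by (simp add: lform_def algebra_simps)
lemma lform_add_right: "lform z (x + y) = lform z x + lform z y"
  by (simp add: lform_def inner_add_right algebra_simps)
lemma lform_scale_right: "lform z (a *\<^sub>R x) = a * lform z x"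
  by (simp add: lform_def algebra_simps)
lemma lform_diff_left: "lform (x - y) z = lform x z - lform y z"
  by (simp add: lform_def inner_diff_left algebra_simps)
lemma lform_diff_right: "lform z (x - y) = lform z x - lform z y"
  by (simp add: lform_def inner_diff_right algebra_simps)

lemmas lform_simps = lform_add_left lform_add_right lform_scale_left lform_scale_right
  lform_diff_left lform_diff_right

lemma bdry_norm: "\<xi> \<in> bdry \<Longrightarrow> norm \<xi> = 1"
  by (simp add: bdry_def)

lemma lform_null: "\<xi> \<in> bdry \<Longrightarrow> lform (\<xi>,1) (\<xi>,1) = 0"
  by (simp add: lform_def power2_norm_eq_inner[symmetric] bdry_norm)

lemma lform_uv_neg:
  assumes "\<xi> \<in> bdry" "\<eta> \<in> bdry" "\<xi> \<noteq> \<eta>"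
  shows "lform (\<xi>,1) (\<eta>,1) < 0"
proof -
  have "0 < norm (\<xi> - \<eta>) ^ 2" using assms by simp
  also have "norm (\<xi> - \<eta>) ^ 2 = (\<xi> - \<eta>) \<bullet> (\<xi> - \<eta>)" by (simp add: power2_norm_eq_inner)
  also have "\<dots> = \<xi> \<bullet> \<xi> + \<eta> \<bullet> \<eta> - 2 * (\<xi> \<bullet> \<eta>)"
    by (simp add: inner_diff_left inner_diff_right inner_commute)
  finally have "0 < \<xi> \<bullet> \<xi> + \<eta> \<bullet> \<eta> - 2 * (\<xi> \<bullet> \<eta>)" .
  moreover have "\<xi> \<bullet> \<xi> = 1" "\<eta> \<bullet> \<eta> = 1" using assms
    by (simp_all add: power2_norm_eq_inner[symmetric] bdry_norm)
  ultimately show ?thesis by (simp add: lform_def)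
qed


lemma lform_comb:
  "lform (a *\<^sub>R x + b *\<^sub>R y) (c *\<^sub>R x + d *\<^sub>R y)
   = a*c*lform x x + (a*d + b*c) * lform x y + b*d*lform y y"
  by (simp add: lform_add_left lform_add_right lform_scale_left lform_scale_right
      lform_sym[of y x] algebra_simps)

lemma hyp_pt:
  assumes "\<xi> \<in> bdry" "\<eta> \<in> bdry" "2 * a * b * lform (\<xi>,1) (\<eta>,1) = -1" "a + b > 0"
  shows "a *\<^sub>R (\<xi>,1) + b *\<^sub>R (\<eta>,1) \<in> hyp_space"
proof -
  have "lform (a *\<^sub>R (\<xi>,1) + b *\<^sub>R (\<eta>,1)) (a *\<^sub>R (\<xi>,1) + b *\<^sub>R (\<eta>,1))
     = 2 * a * b * lform (\<xi>,1) (\<eta>,1)"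
    unfolding lform_comb using lform_null[OF assms(1)] lform_null[OF assms(2)]
    by (simp add: algebra_simps)
  then show ?thesis using assms by (simp add: hyp_space_def)
qed


lemma geo_sub:
  "geodesic \<xi> \<eta> \<subseteq> {a *\<^sub>R (\<xi>,1) + b *\<^sub>R (\<eta>,1) | a b. True}"
  by (auto simp: geodesic_def)

lemma sub_2: "subspace {a *\<^sub>R (x::'a::real_vector) + b *\<^sub>R y | a b. True}"
  unfolding subspace_def
proof (intro conjI ballI allI)
  show "0 \<in> {a *\<^sub>R x + b *\<^sub>R y |a b. True}" by (rule CollectI, rule exI[of _ 0], rule exI[of _ 0]) simp
next
  fix p q assume "p \<in> {a *\<^sub>R x + b *\<^sub>R y |a b. True}" "q \<in> {a *\<^sub>R x + b *\<^sub>R y |a b. True}"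
  then obtain a b c d where "p = a *\<^sub>R x + b *\<^sub>R y" "q = c *\<^sub>R x + d *\<^sub>R y" by auto
  then have "p + q = (a+c) *\<^sub>R x + (b+d) *\<^sub>R y" by (simp add: algebra_simps)
  then show "p + q \<in> {a *\<^sub>R x + b *\<^sub>R y |a b. True}" by blast
next
  fix k p assume "p \<in> {a *\<^sub>R x + b *\<^sub>R y |a b. True}"
  then obtain a b where "p = a *\<^sub>R x + b *\<^sub>R y" by auto
  then have "k *\<^sub>R p = (k*a) *\<^sub>R x + (k*b) *\<^sub>R y" by (simp add: algebra_simps)
  then show "k *\<^sub>R p \<in> {a *\<^sub>R x + b *\<^sub>R y |a b. True}" by blast
qed

lemma geo_memI: "a *\<^sub>R (\<xi>,1) + b *\<^sub>R (\<eta>,1) \<in> hyp_space \<Longrightarrow>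
   a *\<^sub>R (\<xi>,1) + b *\<^sub>R (\<eta>,1) \<in> geodesic \<xi> \<eta>"
  unfolding geodesic_def by blast

lemma geo_pts:
  assumes "\<xi> \<in> bdry" "\<eta> \<in> bdry" "\<xi> \<noteq> \<eta>"
  shows "(\<xi>,1) \<in> span (geodesic \<xi> \<eta>)" "(\<eta>,1) \<in> span (geodesic \<xi> \<eta>)"
proof -
  define L where "L = lform (\<xi>,1) (\<eta>,1)"
  have L: "L < 0" using lform_uv_neg[OF assms] by (simp add: L_def)
  define t where "t = 1 / sqrt (-2*L)"
  define s where "s = 1 / (2 * sqrt (-L))"
  have t: "t > 0" "2*t*t*L = -1" using L by (auto simp: t_def field_simps)
  have s: "s > 0" "2 * (2 * s) * s * L = -1" using L by (auto simp: s_def field_simps)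
  have p1: "t *\<^sub>R (\<xi>,1) + t *\<^sub>R (\<eta>,1) \<in> geodesic \<xi> \<eta>"
    using hyp_pt[OF assms(1,2), of t t] t unfolding L_def by (intro geo_memI) auto
  have p2: "(2 * s) *\<^sub>R (\<xi>,1) + s *\<^sub>R (\<eta>,1) \<in> geodesic \<xi> \<eta>"
    using hyp_pt[OF assms(1,2), of "2 * s" s] s unfolding L_def by (intro geo_memI) auto
  have e1: "(\<xi>,1::real) = (1/s) *\<^sub>R ((2 * s) *\<^sub>R (\<xi>,1) + s *\<^sub>R (\<eta>,1)) - (1/t) *\<^sub>R (t *\<^sub>R (\<xi>,1) + t *\<^sub>R (\<eta>,1))"
    using s t by (simp add: prod_eq_iff vec_eq_iff algebra_simps)
  have e2: "(\<eta>,1::real) = (2/t) *\<^sub>R (t *\<^sub>R (\<xi>,1) + t *\<^sub>R (\<eta>,1)) - (1/s) *\<^sub>R ((2 * s) *\<^sub>R (\<xi>,1) + s *\<^sub>R (\<eta>,1))"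
    using s t by (simp add: prod_eq_iff vec_eq_iff algebra_simps)
  show "(\<xi>,1) \<in> span (geodesic \<xi> \<eta>)"
    by (subst e1) (intro span_diff span_mul span_base p1 p2)
  show "(\<eta>,1) \<in> span (geodesic \<xi> \<eta>)"
    by (subst e2) (intro span_diff span_mul span_base p1 p2)
qed

lemma geo_span:
  assumes "\<xi> \<in> bdry" "\<eta> \<in> bdry" "\<xi> \<noteq> \<eta>" "\<zeta> \<in> bdry"
  shows "(\<zeta>,1) \<in> span (geodesic \<xi> \<eta>) \<longleftrightarrow> \<zeta> = \<xi> \<or> \<zeta> = \<eta>"
proof
  assume "(\<zeta>,1) \<in> span (geodesic \<xi> \<eta>)"
  then have "(\<zeta>,1::real) \<in> {a *\<^sub>R (\<xi>,1) + b *\<^sub>R (\<eta>,1) | a b. True}"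
    using span_minimal[OF geo_sub[of \<xi> \<eta>] sub_2] by (rule subsetD[rotated])
  then obtain a b where ab: "(\<zeta>,(1::real)) = a *\<^sub>R (\<xi>,1) + b *\<^sub>R (\<eta>,1)" by auto
  have "0 = lform (\<zeta>,1) (\<zeta>,1)" using lform_null[OF assms(4)] by simp
  also have "\<dots> = 2*a*b*lform (\<xi>,1) (\<eta>,1)"
    unfolding ab lform_comb using lform_null[OF assms(1)] lform_null[OF assms(2)] by simp
  finally have "a = 0 \<or> b = 0" using lform_uv_neg[OF assms(1-3)] by simp
  moreover have "1 = a + b" "\<zeta> = a *\<^sub>R \<xi> + b *\<^sub>R \<eta>" using ab by auto
  ultimately show "\<zeta> = \<xi> \<or> \<zeta> = \<eta>" by auto
next
  assume "\<zeta> = \<xi> \<or> \<zeta> = \<eta>"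
  then show "(\<zeta>,1) \<in> span (geodesic \<xi> \<eta>)" using geo_pts[OF assms(1-3)] by auto
qed

lemma geo_eq:
  assumes "\<xi> \<in> bdry" "\<eta> \<in> bdry" "\<xi> \<noteq> \<eta>" "\<xi>' \<in> bdry" "\<eta>' \<in> bdry" "\<xi>' \<noteq> \<eta>'"
    and "geodesic \<xi> \<eta> = geodesic \<xi>' \<eta>'"
  shows "{\<xi>, \<eta>} = {\<xi>', \<eta>'}"
proof -
  have "{\<zeta>\<in>bdry. (\<zeta>,1) \<in> span (geodesic \<xi> \<eta>)} = {\<xi>,\<eta>}"
    using geo_span[OF assms(1-3)] assms(1,2) by blast
  moreover have "{\<zeta>\<in>bdry. (\<zeta>,1) \<in> span (geodesic \<xi>' \<eta>')} = {\<xi>',\<eta>'}"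
    using geo_span[OF assms(4-6)] assms(4,5) by blast
  ultimately show ?thesis using assms(7) by simp
qed


lemma scal:
  assumes f: "f \<in> isom" and xe: "\<xi> \<in> bdry" "\<eta> \<in> bdry" "\<xi> \<noteq> \<eta>"
    and fx: "fixes_bdry f \<xi>" "fixes_bdry f \<eta>"
  shows "\<exists>\<alpha>>0. f (\<xi>,1) = \<alpha> *\<^sub>R (\<xi>,1) \<and> f (\<eta>,1) = (1/\<alpha>) *\<^sub>R (\<eta>,1)"
proof -
  define L where "L = lform (\<xi>,1) (\<eta>,1)"
  have L: "L < 0" using lform_uv_neg[OF xe] by (simp add: L_def)
  obtain c where c: "f (\<xi>,1) = c *\<^sub>R (\<xi>,1)" using fx(1) unfolding fixes_bdry_def by blast
  obtain d where d: "f (\<eta>,1) = d *\<^sub>R (\<eta>,1)" using fx(2) unfolding fixes_bdry_def by blast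
  have lin: "linear f" and pres: "\<And>x y. lform (f x) (f y) = lform x y" and hs: "f ` hyp_space = hyp_space"
    using f by (auto simp: isom_def)
  have "c * d * L = L" using pres[of "(\<xi>,1)" "(\<eta>,1)"] unfolding c d L_def
      lform_scale_left lform_scale_right by (simp add: mult.commute)
  then have cd: "c * d = 1" using L by simp
  define t where "t = 1 / sqrt (-2*L)"
  have t: "t > 0" "2*t*t*L = -1" using L by (auto simp: t_def field_simps)
  have p: "t *\<^sub>R (\<xi>,1) + t *\<^sub>R (\<eta>,1) \<in> hyp_space"
    using hyp_pt[OF xe(1,2), of t t] t unfolding L_def by auto
  have "f (t *\<^sub>R (\<xi>,1) + t *\<^sub>R (\<eta>,1)) = t *\<^sub>R f (\<xi>,1) + t *\<^sub>R f (\<eta>,1)"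
    by (simp only: linear_add[OF lin] linear_scale[OF lin])
  also have "\<dots> = (t*c) *\<^sub>R (\<xi>,1) + (t*d) *\<^sub>R (\<eta>,1)" by (simp only: c d scaleR_scaleR)
  finally have "f (t *\<^sub>R (\<xi>,1) + t *\<^sub>R (\<eta>,1)) = (t*c) *\<^sub>R (\<xi>,1) + (t*d) *\<^sub>R (\<eta>,1)" .
  moreover have "f (t *\<^sub>R (\<xi>,1) + t *\<^sub>R (\<eta>,1)) \<in> hyp_space" using p hs by blast
  ultimately have "snd ((t*c) *\<^sub>R (\<xi>,1) + (t*d) *\<^sub>R (\<eta>,1::real)) > 0"
    unfolding hyp_space_def by (metis (mono_tags, lifting) mem_Collect_eq)
  then have "t * (c + d) > 0" by (simp add: distrib_left)
  then have "c + d > 0" using t by (simp add: zero_less_mult_iff)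
  have "c > 0"
  proof (rule ccontr)
    assume "\<not> c > 0"
    then have "c < 0" using cd by (cases "c = 0") auto
    then have "d < 0" using cd by (metis mult_nonpos_nonneg less_le not_one_le_zero not_less)
    then show False using \<open>c + d > 0\<close> \<open>c < 0\<close> by simp
  qed
  moreover have "d = 1/c" using cd \<open>c > 0\<close> by (simp add: field_simps)
  ultimately show ?thesis using c d by blast
qed

lemma scal_ne1:
  assumes f: "f \<in> isom" and xe: "\<xi> \<in> bdry" "\<eta> \<in> bdry" "\<xi> \<noteq> \<eta>"
    and nf: "\<forall>x\<in>hyp_space. f x \<noteq> x"
    and fx: "f (\<xi>,1) = \<alpha> *\<^sub>R (\<xi>,1)" "f (\<eta>,1) = (1/\<alpha>) *\<^sub>R (\<eta>,1)"
  shows "\<alpha> \<noteq> 1"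
proof
  assume a: "\<alpha> = 1"
  define L where "L = lform (\<xi>,1) (\<eta>,1)"
  have L: "L < 0" using lform_uv_neg[OF xe] by (simp add: L_def)
  have lin: "linear f" using f by (auto simp: isom_def)
  define t where "t = 1 / sqrt (-2*L)"
  have t: "t > 0" "2*t*t*L = -1" using L by (auto simp: t_def field_simps)
  have p: "t *\<^sub>R (\<xi>,1) + t *\<^sub>R (\<eta>,1) \<in> hyp_space"
    using hyp_pt[OF xe(1,2), of t t] t unfolding L_def by auto
  have fv: "f (\<eta>,1) = (\<eta>,1)" using fx(2) a by simp
  have "f (t *\<^sub>R (\<xi>,1) + t *\<^sub>R (\<eta>,1)) = t *\<^sub>R f (\<xi>,1) + t *\<^sub>R f (\<eta>,1)"
    by (simp only: linear_add[OF lin] linear_scale[OF lin])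
  also have "\<dots> = t *\<^sub>R (\<xi>,1) + t *\<^sub>R (\<eta>,1)" by (simp only: fv fx(1) a scaleR_one)
  finally have "f (t *\<^sub>R (\<xi>,1) + t *\<^sub>R (\<eta>,1)) = t *\<^sub>R (\<xi>,1) + t *\<^sub>R (\<eta>,1)" .
  then show False using nf p by blast
qed


lemma lform_inner: "lform x y = inner x (fst y, - snd y)"
  by (cases x, cases y) (simp add: lform_def)

lemma lform_abs_le: "\<bar>lform x y\<bar> \<le> norm x * norm y"
proof -
  have "norm (fst y, - snd y) = norm y" by (cases y) (simp add: norm_Pair)
  then show ?thesis unfolding lform_inner using Cauchy_Schwarz_ineq2[of x "(fst y, - snd y)"] by simp
qed

lemma norm_u: "\<xi> \<in> bdry \<Longrightarrow> norm (\<xi>, 1::real) = sqrt 2"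
  by (simp add: norm_Pair bdry_norm)

lemma lform_self_le: "lform w w \<le> norm w ^ 2"
proof -
  obtain a b where w: "w = (a,b)" by (cases w)
  have aa: "a \<bullet> a = norm a ^ 2" by (simp only: power2_norm_eq_inner)
  show ?thesis by (simp add: w lform_def aa norm_Pair power2_eq_square)
qed

definition LL :: "real^'n::finite \<Rightarrow> real^'n \<Rightarrow> real" where "LL \<xi> \<eta> = lform (\<xi>,1) (\<eta>,1)"
definition rr :: "real^'n::finite \<Rightarrow> real^'n \<Rightarrow> real" where "rr \<xi> \<eta> = norm ((1/2) *\<^sub>R (\<xi> + \<eta>))"

lemma rr_lt1:
  assumes "\<xi> \<in> bdry" "\<eta> \<in> bdry" "\<xi> \<noteq> \<eta>"
  shows "rr \<xi> \<eta> < 1" "0 \<le> rr \<xi> \<eta>"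
proof -
  have "0 < norm (\<xi> - \<eta>) ^ 2" using assms by simp
  also have "norm (\<xi> - \<eta>) ^ 2 = (\<xi> - \<eta>) \<bullet> (\<xi> - \<eta>)" by (simp add: power2_norm_eq_inner)
  also have "\<dots> = \<xi> \<bullet> \<xi> + \<eta> \<bullet> \<eta> - 2 * (\<xi> \<bullet> \<eta>)"
    by (simp add: inner_diff_left inner_diff_right inner_commute)
  finally have a: "0 < \<xi> \<bullet> \<xi> + \<eta> \<bullet> \<eta> - 2 * (\<xi> \<bullet> \<eta>)" .
  have b: "\<xi> \<bullet> \<xi> = 1" "\<eta> \<bullet> \<eta> = 1" using assms
    by (simp_all add: power2_norm_eq_inner[symmetric] bdry_norm)
  have "rr \<xi> \<eta> ^ 2 = (1/4) * ((\<xi> + \<eta>) \<bullet> (\<xi> + \<eta>))"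
    by (simp add: rr_def power_divide power2_norm_eq_inner)
  also have "\<dots> = (1/4) * (\<xi> \<bullet> \<xi> + \<eta> \<bullet> \<eta> + 2 * (\<xi> \<bullet> \<eta>))"
    by (simp add: inner_add_left inner_add_right inner_commute)
  finally have "rr \<xi> \<eta> ^ 2 < 1" using a b by simp
  moreover show "0 \<le> rr \<xi> \<eta>" by (simp add: rr_def)
  ultimately show "rr \<xi> \<eta> < 1" by (simp add: power_less_one_iff abs_square_less_1)
qed

lemma perp_bound:
  assumes xe: "\<xi> \<in> bdry" "\<eta> \<in> bdry" "\<xi> \<noteq> \<eta>"
    and zu: "lform z (\<xi>,1) = 0" and zv: "lform z (\<eta>,1) = 0"
  shows "norm z ^ 2 \<le> 2 / (1 - rr \<xi> \<eta> ^ 2) * lform z z"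
proof -
  obtain a b where z: "z = (a, b)" by (cases z)
  define m where "m = (1/2) *\<^sub>R (\<xi> + \<eta>)"
  have "a \<bullet> \<xi> = b" "a \<bullet> \<eta> = b" using zu zv by (simp_all add: z lform_def)
  then have bm: "b = a \<bullet> m" by (simp add: m_def inner_add_right)
  have r: "rr \<xi> \<eta> = norm m" by (simp add: rr_def m_def)
  have r1: "rr \<xi> \<eta> ^ 2 < 1" using rr_lt1[OF xe] by (simp add: abs_square_less_1)
  have bb: "b ^ 2 \<le> norm a ^ 2 * rr \<xi> \<eta> ^ 2"
  proof -
    have "\<bar>b\<bar> \<le> norm a * norm m" using Cauchy_Schwarz_ineq2[of a m] bm by simp
    then have "\<bar>b\<bar>^2 \<le> (norm a * norm m)^2"
      by (intro power_mono) auto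
    then have "b^2 \<le> (norm a * norm m)^2" by simp
    then show ?thesis by (simp add: r power_mult_distrib)
  qed
  have aa: "a \<bullet> a = norm a ^ 2" by (simp only: power2_norm_eq_inner)
  have lz: "lform z z = norm a ^ 2 - b ^ 2"
    by (simp add: z lform_def aa power2_eq_square)
  have nz: "norm z ^ 2 = norm a ^ 2 + b ^ 2" by (simp add: z norm_Pair)
  have "(1 - rr \<xi> \<eta> ^ 2) * norm z ^ 2 \<le> 2 * lform z z"
  proof -
    define A where "A = norm a ^ 2"
    define B where "B = b ^ 2"
    define R where "R = rr \<xi> \<eta> ^ 2"
    have A0: "A \<ge> 0" "R \<ge> 0" by (simp_all add: A_def R_def)
    have h1: "B \<le> A * R" using bb by (simp add: A_def B_def R_def)
    have R1: "R < 1" using r1 by (simp add: R_def)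
    have "B * (3 - R) \<le> A * R * (3 - R)" using h1 R1 by (intro mult_right_mono) auto
    moreover have "A * ((1 - R)^2) \<ge> 0" using A0 by simp
    ultimately have "(1 - R) * (A + B) \<le> 2 * (A - B)"
      by (simp add: algebra_simps power2_eq_square)
    then show ?thesis unfolding lz nz A_def B_def R_def .
  qed
  then show ?thesis using r1 by (simp add: field_simps)
qed


lemma norm_bound:
  assumes xe: "\<xi> \<in> bdry" "\<eta> \<in> bdry" "\<xi> \<noteq> \<eta>"
    and lin: "linear f" and pres: "\<And>x y. lform (f x) (f y) = lform x y"
    and ap: "\<alpha> > 0" and fu: "f (\<xi>,1) = \<alpha> *\<^sub>R (\<xi>,1)" and fv: "f (\<eta>,1) = (1/\<alpha>) *\<^sub>R (\<eta>,1)"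
  shows "norm (f x) \<le> ((\<alpha> + 1/\<alpha>) * (2 / \<bar>LL \<xi> \<eta>\<bar>)
            + sqrt (2 / (1 - rr \<xi> \<eta> ^ 2)) * (1 + 4 / \<bar>LL \<xi> \<eta>\<bar>)) * norm x"
proof -
  define u :: "'a lvec" where "u = (\<xi>,1)"
  define v :: "'a lvec" where "v = (\<eta>,1)"
  define L where "L = LL \<xi> \<eta>"
  have L: "L < 0" using lform_uv_neg[OF xe] by (simp add: L_def LL_def)
  have Luv: "lform u v = L" "lform v u = L" by (simp_all add: u_def v_def L_def LL_def lform_sym)
  have uu: "lform u u = 0" "lform v v = 0" using lform_null xe by (auto simp: u_def v_def)
  have nu: "norm u = sqrt 2" "norm v = sqrt 2" using norm_u xe by (auto simp: u_def v_def)
  define N where "N = norm x"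
  define p where "p = lform x v / L"
  define q where "q = lform x u / L"
  have pb: "\<bar>p\<bar> * sqrt 2 \<le> 2 * N / \<bar>L\<bar>"
  proof -
    have "\<bar>lform x v\<bar> \<le> N * sqrt 2" using lform_abs_le[of x v] nu by (simp add: N_def)
    then have "\<bar>lform x v\<bar> * sqrt 2 \<le> N * sqrt 2 * sqrt 2" by (simp add: mult_right_mono)
    then show ?thesis using L by (simp add: p_def abs_divide field_simps)
  qed
  have qb: "\<bar>q\<bar> * sqrt 2 \<le> 2 * N / \<bar>L\<bar>"
  proof -
    have "\<bar>lform x u\<bar> \<le> N * sqrt 2" using lform_abs_le[of x u] nu by (simp add: N_def)
    then have "\<bar>lform x u\<bar> * sqrt 2 \<le> N * sqrt 2 * sqrt 2" by (simp add: mult_right_mono)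
    then show ?thesis using L by (simp add: q_def abs_divide field_simps)
  qed
  define w where "w = x - p *\<^sub>R u - q *\<^sub>R v"
  have wu: "lform w u = 0"
    unfolding w_def lform_diff_left lform_scale_left Luv uu q_def using L by simp
  have wv: "lform w v = 0"
    unfolding w_def lform_diff_left lform_scale_left Luv uu p_def using L by simp
  have xd: "x = p *\<^sub>R u + q *\<^sub>R v + w" by (simp add: w_def)
  define z where "z = f w"
  have fx: "f x = (p * \<alpha>) *\<^sub>R u + (q / \<alpha>) *\<^sub>R v + z"
  proof -
    have "f x = p *\<^sub>R f u + q *\<^sub>R f v + f w"
      by (subst xd) (simp only: linear_add[OF lin] linear_scale[OF lin])
    then show ?thesis using fu fv by (simp add: u_def v_def z_def)
  qed
  have zu: "lform z (\<xi>,1) = 0"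
  proof -
    have "lform z (f u) = 0" using pres[of w u] wu by (simp add: z_def)
    moreover have fu': "f u = \<alpha> *\<^sub>R u" using fu by (simp only: u_def)
    ultimately have "\<alpha> * lform z u = 0" by (simp only: fu' lform_scale_right)
    then show ?thesis using ap by (simp add: u_def)
  qed
  have zv: "lform z (\<eta>,1) = 0"
  proof -
    have "lform z (f v) = 0" using pres[of w v] wv by (simp add: z_def)
    moreover have fv': "f v = (1/\<alpha>) *\<^sub>R v" using fv by (simp only: v_def)
    ultimately have "(1/\<alpha>) * lform z v = 0" by (simp only: fv' lform_scale_right)
    then show ?thesis using ap by (simp add: v_def)
  qed
  define c where "c = 2 / (1 - rr \<xi> \<eta> ^ 2)"
  have r1: "rr \<xi> \<eta> ^ 2 < 1" using rr_lt1[OF xe] by (simp add: abs_square_less_1)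
  have c0: "c > 0" using r1 by (simp add: c_def)
  have "norm z ^ 2 \<le> c * lform z z" using perp_bound[OF xe zu zv] by (simp add: c_def)
  also have "lform z z = lform w w" using pres by (simp add: z_def)
  also have "c * lform w w \<le> c * norm w ^ 2" using lform_self_le c0 by simp
  finally have "norm z ^ 2 \<le> c * norm w ^ 2" .
  then have "sqrt (norm z ^ 2) \<le> sqrt (c * norm w ^ 2)" by (rule real_sqrt_le_mono)
  then have zb: "norm z \<le> sqrt c * norm w" by (simp add: real_sqrt_mult)
  have "norm w \<le> norm x + norm (p *\<^sub>R u) + norm (q *\<^sub>R v)" unfolding w_def
    using norm_triangle_ineq4[of "x - p *\<^sub>R u" "q *\<^sub>R v"] norm_triangle_ineq4[of x "p *\<^sub>R u"]
    by linarith
  also have "\<dots> = N + \<bar>p\<bar> * sqrt 2 + \<bar>q\<bar> * sqrt 2" using nu by (simp add: N_def)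
  also have "\<dots> \<le> N + 2 * N / \<bar>L\<bar> + 2 * N / \<bar>L\<bar>" using pb qb by simp
  finally have wb: "norm w \<le> N * (1 + 4 / \<bar>L\<bar>)" by (simp add: algebra_simps)
  have "norm (f x) \<le> norm ((p * \<alpha>) *\<^sub>R u) + norm ((q / \<alpha>) *\<^sub>R v) + norm z"
    unfolding fx
    using norm_triangle_ineq[of "(p * \<alpha>) *\<^sub>R u + (q / \<alpha>) *\<^sub>R v" z]
      norm_triangle_ineq[of "(p * \<alpha>) *\<^sub>R u" "(q / \<alpha>) *\<^sub>R v"]
    by linarith
  also have "\<dots> = \<alpha> * (\<bar>p\<bar> * sqrt 2) + (1/\<alpha>) * (\<bar>q\<bar> * sqrt 2) + norm z"
    using nu ap by (simp add: abs_mult)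
  also have "\<dots> \<le> \<alpha> * (2 * N / \<bar>L\<bar>) + (1/\<alpha>) * (2 * N / \<bar>L\<bar>) + sqrt c * (N * (1 + 4 / \<bar>L\<bar>))"
  proof -
    have "sqrt c * norm w \<le> sqrt c * (N * (1 + 4 / \<bar>L\<bar>))" using wb c0 by (intro mult_left_mono) auto
    then have "norm z \<le> sqrt c * (N * (1 + 4 / \<bar>L\<bar>))" using zb by linarith
    moreover have "\<alpha> * (\<bar>p\<bar> * sqrt 2) \<le> \<alpha> * (2 * N / \<bar>L\<bar>)" using pb ap by (intro mult_left_mono) auto
    moreover have "(1/\<alpha>) * (\<bar>q\<bar> * sqrt 2) \<le> (1/\<alpha>) * (2 * N / \<bar>L\<bar>)" using qb ap by (intro mult_left_mono) auto
    ultimately show ?thesis by linarith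
  qed
  also have "\<dots> = ((\<alpha> + 1/\<alpha>) * (2 / \<bar>L\<bar>) + sqrt c * (1 + 4 / \<bar>L\<bar>)) * N"
    using ap L by (simp add: field_simps)
  finally show ?thesis by (simp add: L_def c_def N_def)
qed


lemma funpow_in: "isom_subgroup K \<Longrightarrow> f \<in> K \<Longrightarrow> f ^^ n \<in> K"
  by (induction n) (auto simp: isom_subgroup_def)

lemma funpow_scal: "linear f \<Longrightarrow> f x = c *\<^sub>R x \<Longrightarrow> (f ^^ n) x = (c ^ n) *\<^sub>R x"
proof (induction n)
  case 0 then show ?case by simp
next
  case (Suc n)
  have "(f ^^ Suc n) x = f ((f ^^ n) x)" by simp
  also have "\<dots> = f ((c ^ n) *\<^sub>R x)" using Suc by simp
  also have "\<dots> = (c ^ n) *\<^sub>R f x" using linear_scale[OF Suc.prems(1)] by simp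
  also have "\<dots> = (c ^ Suc n) *\<^sub>R x" using Suc.prems(2) by (simp add: mult.commute)
  finally show ?case .
qed

lemma inv_scal:
  assumes "linear (inv f)" "bij f" "f x = c *\<^sub>R x" "c \<noteq> 0"
  shows "inv f x = (1/c) *\<^sub>R x"
proof -
  have "inv f (f x) = x" using assms(2) by (simp add: bij_is_inj)
  then have "inv f (c *\<^sub>R x) = x" using assms(3) by simp
  then have "c *\<^sub>R inv f x = x" using linear_scale[OF assms(1)] by simp
  moreover have "inv f x = (1/c) *\<^sub>R (c *\<^sub>R inv f x)" using assms(4) by simp
  ultimately show ?thesis by simp
qed

lemma sum_recip_le:
  assumes "(D::real) \<ge> 1" "1/D \<le> b" "b \<le> D"
  shows "b + 1/b \<le> D + 1/D"
proof -
  have D0: "D > 0" using assms by simp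
  have b0: "b > 0" using assms D0 by (meson divide_pos_pos less_le_trans zero_less_one)
  have "(b - D) * (b - 1/D) \<le> 0" using assms by (intro mult_nonpos_nonneg) auto
  moreover have "(b - D) * (b - 1/D) = b*b + 1 - (D + 1/D) * b" using D0 by (simp add: field_simps)
  ultimately have "b*b + 1 \<le> (D + 1/D) * b" by linarith
  then show ?thesis using b0 by (simp add: field_simps)
qed

definition bnd :: "real^'n::finite \<Rightarrow> real^'n \<Rightarrow> real \<Rightarrow> real" where
  "bnd \<xi> \<eta> D = (D + 1/D) * (2 / \<bar>LL \<xi> \<eta>\<bar>) + sqrt (2 / (1 - rr \<xi> \<eta> ^ 2)) * (1 + 4 / \<bar>LL \<xi> \<eta>\<bar>)"

lemma elem_bound:
  assumes xe: "\<xi> \<in> bdry" "\<eta> \<in> bdry" "\<xi> \<noteq> \<eta>"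
    and f: "f \<in> isom" and b: "\<beta> > 0" "f (\<xi>,1) = \<beta> *\<^sub>R (\<xi>,1)" "f (\<eta>,1) = (1/\<beta>) *\<^sub>R (\<eta>,1)"
    and D: "D \<ge> 1" "1/D \<le> \<beta>" "\<beta> \<le> D"
  shows "onorm f \<le> bnd \<xi> \<eta> D"
proof (rule onorm_le)
  fix x
  have lin: "linear f" and pres: "\<And>x y. lform (f x) (f y) = lform x y" using f by (auto simp: isom_def)
  have L: "LL \<xi> \<eta> < 0" using lform_uv_neg[OF xe] by (simp add: LL_def)
  have r1: "rr \<xi> \<eta> ^ 2 < 1" using rr_lt1[OF xe] by (simp add: abs_square_less_1)
  have "norm (f x) \<le> ((\<beta> + 1/\<beta>) * (2 / \<bar>LL \<xi> \<eta>\<bar>)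
            + sqrt (2 / (1 - rr \<xi> \<eta> ^ 2)) * (1 + 4 / \<bar>LL \<xi> \<eta>\<bar>)) * norm x"
    by (rule norm_bound[OF xe lin pres b])
  also have "\<dots> \<le> bnd \<xi> \<eta> D * norm x" unfolding bnd_def
  proof (rule mult_right_mono)
    have "(\<beta> + 1/\<beta>) * (2 / \<bar>LL \<xi> \<eta>\<bar>) \<le> (D + 1/D) * (2 / \<bar>LL \<xi> \<eta>\<bar>)"
      using sum_recip_le[OF D] by (rule mult_right_mono) simp
    then show "(\<beta> + 1/\<beta>) * (2 / \<bar>LL \<xi> \<eta>\<bar>) + sqrt (2 / (1 - rr \<xi> \<eta> ^ 2)) * (1 + 4 / \<bar>LL \<xi> \<eta>\<bar>)
      \<le> (D + 1/D) * (2 / \<bar>LL \<xi> \<eta>\<bar>) + sqrt (2 / (1 - rr \<xi> \<eta> ^ 2)) * (1 + 4 / \<bar>LL \<xi> \<eta>\<bar>)"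
      by linarith
  qed simp
  finally show "norm (f x) \<le> bnd \<xi> \<eta> D * norm x" .
qed


lemma linear_bl: "linear (f :: 'n::finite lmap) \<Longrightarrow> bounded_linear f"
  by (simp add: linear_conv_bounded_linear)

lemma pigeon:
  fixes G :: "('n::finite) lmap set" and F :: "nat \<Rightarrow> 'n lmap"
  assumes grp: "isom_subgroup G" and disc: "discrete_group G"
    and FG: "\<And>a. F a \<in> G" and B: "\<And>a. onorm (F a) \<le> B" "\<And>a. onorm (inv (F a)) \<le> B"
  shows "\<exists>a b. a < b \<and> F a = F b"
proof (rule ccontr)
  assume nd: "\<not> (\<exists>a b. a < b \<and> F a = F b)"
  have iso: "\<And>f. f \<in> G \<Longrightarrow> f \<in> isom" using grp by (auto simp: isom_subgroup_def)
  have linG: "\<And>f. f \<in> G \<Longrightarrow> linear f" and bijG: "\<And>f. f \<in> G \<Longrightarrow> bij f"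
    using iso by (auto simp: isom_def)
  have invG: "\<And>f. f \<in> G \<Longrightarrow> inv f \<in> G" and compG: "\<And>f g. f \<in> G \<Longrightarrow> g \<in> G \<Longrightarrow> f \<circ> g \<in> G"
    and idG: "id \<in> G" using grp by (auto simp: isom_subgroup_def)
  obtain \<epsilon> where e: "\<epsilon> > 0" "\<And>h. h \<in> G \<Longrightarrow> onorm (\<lambda>v. h v - id v) < \<epsilon> \<Longrightarrow> h = id"
    using disc idG unfolding discrete_group_def by blast
  have B0: "B \<ge> 0" using B(1)[of 0] onorm_pos_le[OF linear_bl[OF linG[OF FG[of 0]]]] by linarith
  define S where "S a = Blinfun (F a)" for a
  have Sap: "blinfun_apply (S a) = F a" for a
    unfolding S_def by (rule bounded_linear_Blinfun_apply[OF linear_bl[OF linG[OF FG]]])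
  have nS: "norm (S a) = onorm (F a)" for a by (simp add: norm_blinfun.rep_eq Sap)
  have "bounded (range S)" unfolding bounded_iff using B(1) nS by auto
  then obtain l r where r: "strict_mono r" "(S \<circ> r) \<longlonglongrightarrow> l"
    using bounded_imp_convergent_subsequence by blast
  have "Cauchy (S \<circ> r)" using r(2) by (rule LIMSEQ_imp_Cauchy)
  moreover have "\<epsilon> / (B + 1) > 0" using e B0 by simp
  ultimately obtain M where M: "\<And>m n. m \<ge> M \<Longrightarrow> n \<ge> M \<Longrightarrow> norm ((S \<circ> r) m - (S \<circ> r) n) < \<epsilon> / (B + 1)"
    using CauchyD by blast
  define a where "a = r M"
  define b where "b = r (Suc M)"
  have ab: "a < b" using r(1) by (simp add: a_def b_def strict_mono_def)
  have close: "norm (S a - S b) < \<epsilon> / (B + 1)" using M[of M "Suc M"] by (simp add: a_def b_def)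
  have ne: "F a \<noteq> F b" using nd ab by blast
  define k where "k = F a \<circ> inv (F b)"
  have kG: "k \<in> G" unfolding k_def by (intro compG invG FG)
  have bb: "bij (F b)" by (rule bijG[OF FG])
  have kne: "k \<noteq> id"
  proof
    assume "k = id"
    then have "F a (inv (F b) (F b x)) = F b x" for x unfolding k_def by (metis comp_apply id_apply)
    then have "F a x = F b x" for x using bb by (simp add: bij_is_inj)
    then show False using ne by blast
  qed
  have blD: "bounded_linear (\<lambda>v. F a v - F b v)"
    by (intro bounded_linear_sub linear_bl linG FG)
  have blI: "bounded_linear (inv (F b))" by (intro linear_bl linG invG FG)
  have "onorm (\<lambda>v. k v - id v) = onorm ((\<lambda>v. F a v - F b v) \<circ> inv (F b))"
  proof -
    have "(\<lambda>v. k v - id v) = (\<lambda>v. F a v - F b v) \<circ> inv (F b)"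
    proof
      fix v
      have "F b (inv (F b) v) = v" using bb by (simp add: bij_is_surj surj_f_inv_f)
      then show "k v - id v = ((\<lambda>v. F a v - F b v) \<circ> inv (F b)) v" by (simp add: k_def)
    qed
    then show ?thesis by simp
  qed
  also have "\<dots> \<le> onorm (\<lambda>v. F a v - F b v) * onorm (inv (F b))"
    by (rule onorm_compose[OF blD blI])
  also have "onorm (\<lambda>v. F a v - F b v) = norm (S a - S b)"
    by (simp add: norm_blinfun.rep_eq Sap minus_blinfun.rep_eq)
  also have "norm (S a - S b) * onorm (inv (F b)) \<le> (\<epsilon> / (B + 1)) * B"
    using close B(2)[of b] onorm_pos_le[OF blI] \<open>\<epsilon> / (B + 1) > 0\<close> by (intro mult_mono) auto
  also have "\<dots> < \<epsilon>" using e B0 by (simp add: field_simps)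
  finally have "k = id" using e(2)[OF kG] by blast
  then show False using kne by blast
qed


lemma choose_k:
  fixes c d :: real
  assumes "c > 0" "d > 0" "ln c * ln d \<le> 0" "ln d \<noteq> 0"
  shows "\<exists>k::nat. exp (- \<bar>ln d\<bar>) \<le> c ^ a * d ^ k \<and> c ^ a * d ^ k \<le> exp \<bar>ln d\<bar>"
proof -
  define X where "X = real a * \<bar>ln c\<bar>"
  define Y where "Y = \<bar>ln d\<bar>"
  have Y: "Y > 0" using assms(4) by (simp add: Y_def)
  have X0: "X \<ge> 0" by (simp add: X_def)
  define k where "k = nat \<lfloor>X / Y\<rfloor>"
  have fl: "real k = of_int \<lfloor>X / Y\<rfloor>" using X0 Y by (simp add: k_def)
  have k1: "real k * Y \<le> X"
  proof -
    have "real k \<le> X / Y" using fl by simp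
    then show ?thesis using Y by (simp add: pos_le_divide_eq)
  qed
  have k2: "X < real k * Y + Y"
  proof -
    have "X / Y < real k + 1" using fl by linarith
    then show ?thesis using Y by (simp add: pos_divide_less_eq algebra_simps)
  qed
  define e where "e = real a * ln c + real k * ln d"
  have eabs: "\<bar>e\<bar> \<le> Y"
  proof (cases "ln d < 0")
    case True
    then have "ln c \<ge> 0" using assms(3) by (metis mult_neg_neg not_le less_le_not_le mult_less_0_iff not_less)
    then have "e = X - real k * Y" using True by (simp add: e_def X_def Y_def)
    then show ?thesis using k1 k2 by simp
  next
    case False
    then have "ln d > 0" using assms(4) by simp
    then have "ln c \<le> 0" using assms(3) by (simp add: mult_le_0_iff)
    then have "e = - (X - real k * Y)" using \<open>ln d > 0\<close> by (simp add: e_def X_def Y_def)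
    then show ?thesis using k1 k2 by simp
  qed
  have "c ^ a * d ^ k = exp e"
  proof -
    have "c ^ a = exp (real a * ln c)" using assms(1) by (simp add: exp_of_nat_mult)
    moreover have "d ^ k = exp (real k * ln d)" using assms(2) by (simp add: exp_of_nat_mult)
    ultimately show ?thesis by (simp add: e_def exp_add)
  qed
  moreover have "exp (- Y) \<le> exp e" "exp e \<le> exp Y" using eabs by auto
  ultimately have "exp (- \<bar>ln d\<bar>) \<le> c ^ a * d ^ k \<and> c ^ a * d ^ k \<le> exp \<bar>ln d\<bar>"
    by (simp add: Y_def)
  then show ?thesis by blast
qed


lemma Fscal:
  assumes "linear g" "linear h" "g x = c *\<^sub>R x" "h x = d *\<^sub>R x"
  shows "(g ^^ a \<circ> h ^^ k) x = (c ^ a * d ^ k) *\<^sub>R x"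
proof -
  have lg: "linear (g ^^ a)"
  proof (induction a)
    case 0 show ?case by (simp add: linear_ident)
  next
    case (Suc a) show ?case by (subst funpow.simps(2)) (rule linear_compose[OF Suc assms(1)])
  qed
  have "(g ^^ a \<circ> h ^^ k) x = (g ^^ a) ((d ^ k) *\<^sub>R x)" using funpow_scal[OF assms(2,4)] by simp
  also have "\<dots> = (d ^ k) *\<^sub>R (g ^^ a) x" using linear_scale[OF lg] by simp
  also have "\<dots> = (c ^ a * d ^ k) *\<^sub>R x" using funpow_scal[OF assms(1,3)] by (simp add: mult.commute)
  finally show ?thesis .
qed

theorem lemma2p9:
  fixes G H :: "('n::finite) lmap set"
  assumes "kleinian G" and "non_elementary G" and "fin_generated G" and "torsion_free G"
    and "isom_subgroup H" and "H \<subseteq> G" and "Ax G = Ax H"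
  shows "\<forall>g\<in>G. hyperbolic g \<longrightarrow> (\<exists>m::nat. m > 0 \<and> g ^^ m \<in> H)"
proof (intro ballI impI)
  fix g assume gG: "g \<in> G" and hg: "hyperbolic g"
  have grp: "isom_subgroup G" and disc: "discrete_group G" using assms(1) by (auto simp: kleinian_def)
  have Hgrp: "isom_subgroup H" by fact
  have Giso: "\<And>f. f \<in> G \<Longrightarrow> f \<in> isom" using grp by (auto simp: isom_subgroup_def)
  have Glin: "\<And>f. f \<in> G \<Longrightarrow> linear f" and Gbij: "\<And>f. f \<in> G \<Longrightarrow> bij f"
    using Giso by (auto simp: isom_def)
  have Ginv: "\<And>f. f \<in> G \<Longrightarrow> inv f \<in> G" and Gcomp: "\<And>f g. f \<in> G \<Longrightarrow> g \<in> G \<Longrightarrow> f \<circ> g \<in> G"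
    using grp by (auto simp: isom_subgroup_def)
  have Hinv: "\<And>f. f \<in> H \<Longrightarrow> inv f \<in> H" and Hcomp: "\<And>f g. f \<in> H \<Longrightarrow> g \<in> H \<Longrightarrow> f \<circ> g \<in> H"
    using Hgrp by (auto simp: isom_subgroup_def)
  obtain \<xi> \<eta> where xe: "\<xi> \<noteq> \<eta>" and fg: "{\<zeta>. fixes_bdry g \<zeta>} = {\<xi>, \<eta>}"
    using hg unfolding hyperbolic_def by blast
  have fgx: "fixes_bdry g \<xi>" "fixes_bdry g \<eta>" using fg by blast+
  then have xb: "\<xi> \<in> bdry" "\<eta> \<in> bdry" by (auto simp: fixes_bdry_def)
  have "geodesic \<xi> \<eta> \<in> Ax G" unfolding Ax_def using gG hg fg by blast
  then have "geodesic \<xi> \<eta> \<in> Ax H" using assms(7) by simp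
  then obtain \<xi>' \<eta>' h where geq: "geodesic \<xi> \<eta> = geodesic \<xi>' \<eta>'" and hH: "h \<in> H"
    and hh: "hyperbolic h" and fh: "{\<zeta>. fixes_bdry h \<zeta>} = {\<xi>', \<eta>'}"
    unfolding Ax_def by blast
  obtain a0 b0 where "a0 \<noteq> b0" "{\<zeta>. fixes_bdry h \<zeta>} = {a0, b0}" using hh unfolding hyperbolic_def by blast
  then have xe': "\<xi>' \<noteq> \<eta>'" using fh by (metis doubleton_eq_iff)
  have "fixes_bdry h \<xi>'" "fixes_bdry h \<eta>'" using fh by blast+
  then have xb': "\<xi>' \<in> bdry" "\<eta>' \<in> bdry" by (auto simp: fixes_bdry_def)
  have "{\<xi>, \<eta>} = {\<xi>', \<eta>'}" by (rule geo_eq[OF xb xe xb' xe' geq])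
  then have fhx: "fixes_bdry h \<xi>" "fixes_bdry h \<eta>" using fh by blast+
  have hG: "h \<in> G" using hH assms(6) by blast
  obtain c where c: "c > 0" "g (\<xi>,1) = c *\<^sub>R (\<xi>,1)" "g (\<eta>,1) = (1/c) *\<^sub>R (\<eta>,1)"
    using scal[OF Giso[OF gG] xb xe fgx] by blast
  obtain d0 where d0: "d0 > 0" "h (\<xi>,1) = d0 *\<^sub>R (\<xi>,1)" "h (\<eta>,1) = (1/d0) *\<^sub>R (\<eta>,1)"
    using scal[OF Giso[OF hG] xb xe fhx] by blast
  have d01: "d0 \<noteq> 1"
    using scal_ne1[OF Giso[OF hG] xb xe _ d0(2,3)] hh unfolding hyperbolic_def by blast
  obtain h2 d where h2H: "h2 \<in> H" and d: "d > 0" "h2 (\<xi>,1) = d *\<^sub>R (\<xi>,1)" "h2 (\<eta>,1) = (1/d) *\<^sub>R (\<eta>,1)"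
    and cd: "ln c * ln d \<le> 0" "ln d \<noteq> 0"
  proof (cases "ln c * ln d0 \<le> 0")
    case True
    moreover have "ln d0 \<noteq> 0" using d0(1) d01 by simp
    ultimately show ?thesis using that[OF hH d0] by blast
  next
    case False
    have ihH: "inv h \<in> H" using Hinv[OF hH] .
    have lin: "linear (inv h)" using Glin[of "inv h"] ihH assms(6) by blast
    have i1: "inv h (\<xi>,1) = (1/d0) *\<^sub>R (\<xi>,1)"
      by (rule inv_scal[OF lin Gbij[OF hG] d0(2)]) (use d0(1) in simp)
    have i2: "inv h (\<eta>,1) = (1/(1/d0)) *\<^sub>R (\<eta>,1)"
      by (rule inv_scal[OF lin Gbij[OF hG] d0(3)]) (use d0(1) in simp)
    have "ln c * ln (1/d0) \<le> 0" using False d0(1) by (simp add: ln_div)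
    moreover have "ln (1/d0) \<noteq> 0" using d0(1) d01 by (simp add: ln_div)
    ultimately show ?thesis using that[OF ihH _ i1 i2] d0(1) by simp
  qed
  have h2G: "h2 \<in> G" using h2H assms(6) by blast
  define D where "D = exp \<bar>ln d\<bar>"
  have D1: "D \<ge> 1" by (simp add: D_def)
  have D0: "D > 0" by (simp add: D_def)
  have iD: "exp (- \<bar>ln d\<bar>) = 1/D" by (simp add: D_def exp_minus field_simps)
  define kk where "kk a = (SOME k::nat. exp (- \<bar>ln d\<bar>) \<le> c ^ a * d ^ k \<and> c ^ a * d ^ k \<le> exp \<bar>ln d\<bar>)" for a
  have kk: "1/D \<le> c ^ a * d ^ kk a \<and> c ^ a * d ^ kk a \<le> D" for a
  proof -
    have "exp (- \<bar>ln d\<bar>) \<le> c ^ a * d ^ kk a \<and> c ^ a * d ^ kk a \<le> exp \<bar>ln d\<bar>"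
      unfolding kk_def by (rule someI_ex[OF choose_k[OF c(1) d(1) cd]])
    then show ?thesis unfolding iD by (simp add: D_def)
  qed
  define \<beta> where "\<beta> a = c ^ a * d ^ kk a" for a
  have \<beta>0: "\<beta> a > 0" for a using c(1) d(1) by (simp add: \<beta>_def)
  define F where "F a = g ^^ a \<circ> h2 ^^ kk a" for a
  have FG: "F a \<in> G" for a unfolding F_def by (intro Gcomp funpow_in[OF grp] gG h2G)
  have Fu: "F a (\<xi>,1) = \<beta> a *\<^sub>R (\<xi>,1)" for a
    unfolding F_def \<beta>_def by (rule Fscal[OF Glin[OF gG] Glin[OF h2G] c(2) d(2)])
  have Fv: "F a (\<eta>,1) = (1 / \<beta> a) *\<^sub>R (\<eta>,1)" for a
    unfolding F_def \<beta>_def using Fscal[OF Glin[OF gG] Glin[OF h2G] c(3) d(3), of a "kk a"]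
    by (simp add: power_one_over)
  have B1: "onorm (F a) \<le> bnd \<xi> \<eta> D" for a
    using elem_bound[OF xb xe Giso[OF FG] \<beta>0 Fu Fv D1] kk[of a] by (simp add: \<beta>_def)
  have B2: "onorm (inv (F a)) \<le> bnd \<xi> \<eta> D" for a
  proof -
    have lin: "linear (inv (F a))" by (rule Glin[OF Ginv[OF FG]])
    have i1: "inv (F a) (\<xi>,1) = (1 / \<beta> a) *\<^sub>R (\<xi>,1)"
      by (rule inv_scal[OF lin Gbij[OF FG] Fu]) (use \<beta>0[of a] in simp)
    have i2: "inv (F a) (\<eta>,1) = (1 / (1 / \<beta> a)) *\<^sub>R (\<eta>,1)"
      by (rule inv_scal[OF lin Gbij[OF FG] Fv]) (use \<beta>0[of a] in simp)
    have "1/D \<le> 1 / \<beta> a" "1 / \<beta> a \<le> D" using kk[of a] \<beta>0[of a] D0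
      by (auto simp: \<beta>_def field_simps)
    then show ?thesis
      using elem_bound[OF xb xe Giso[OF Ginv[OF FG]] _ i1 i2 D1] \<beta>0[of a] by simp
  qed
  obtain a b where ab: "a < b" "F a = F b" using pigeon[OF grp disc FG B1 B2] by blast
  have injga: "inj (g ^^ a)" using Gbij[OF gG] by (simp add: bij_is_inj)
  have bijh: "bij (h2 ^^ kk b)" using Gbij[OF h2G] by simp
  have gb: "g ^^ b = g ^^ a \<circ> g ^^ (b - a)" using ab(1) by (simp add: funpow_add[symmetric])
  have e1: "g ^^ (b - a) \<circ> h2 ^^ kk b = h2 ^^ kk a"
  proof
    fix x
    have "(g ^^ a) ((g ^^ (b - a) \<circ> h2 ^^ kk b) x) = (g ^^ a) ((h2 ^^ kk a) x)"
      using fun_cong[OF ab(2), of x] gb by (simp add: F_def)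
    then show "(g ^^ (b - a) \<circ> h2 ^^ kk b) x = (h2 ^^ kk a) x" using injga by (meson injD)
  qed
  have "g ^^ (b - a) = h2 ^^ kk a \<circ> inv (h2 ^^ kk b)"
  proof
    fix x
    have "(g ^^ (b - a)) x = (g ^^ (b - a)) ((h2 ^^ kk b) (inv (h2 ^^ kk b) x))"
      using bijh by (simp add: bij_is_surj surj_f_inv_f)
    also have "\<dots> = (h2 ^^ kk a) (inv (h2 ^^ kk b) x)" using fun_cong[OF e1] by simp
    finally show "(g ^^ (b - a)) x = (h2 ^^ kk a \<circ> inv (h2 ^^ kk b)) x" by simp
  qed
  moreover have "h2 ^^ kk a \<circ> inv (h2 ^^ kk b) \<in> H"
    by (intro Hcomp Hinv funpow_in[OF Hgrp] h2H)
  ultimately show "\<exists>m::nat. m > 0 \<and> g ^^ m \<in> H" using ab(1) by (intro exI[of _ "b - a"]) simp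
qed

end
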